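(* Let $M$ be a monoid of binary relations on a finite set $Q$, let $e\in M$ be an idempotent, and let $\Gamma$ be the set of strongly connected components of the restriction of $e$ to its set of fixed points. For $m\in H(e)$ define the relation $\gamma_e(m)$ on $\Gamma$ by $\gamma_e(m)=\{(\rho,\sigma)\in\Gamma\times\Gamma\mid (r,s)\in m\text{ and }(s,r)\in m^{-1}\text{ for some }r\in\rho,\ s\in\sigma\}$. Then each $\gamma_e(m)$ is a permutation of $\Gamma$, and $m\mapsto\gamma_e(m)$ is an isomorphism from the group $H(e)$ onto a group of permutations of $\Gamma$.
   Context: A monoid of relations on $Q$ is a set of binary relations on $Q$ containing the identity relation and closed under composition $mn=\{(p,q)\mid\exists r,(p,r)\in m,(r,q)\in n\}$. A fixed point of $e$ is $q$ with $(q,q)\in e$. $H(e)$ denotes the $\mathcal H$-class of $e$ in $M$ (Green's relation $\mathcal H=\mathcal R\cap\mathcal L$); since it contains the idempotent $e$ it is a group with identity $e$, and $m^{-1}$ denotes the inverse of $m$ in this group. *)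

theory Defs
  imports Main
begin

definition rel_monoid :: "'q set \<Rightarrow> ('q \<times> 'q) set set \<Rightarrow> bool" where
  "rel_monoid Q M \<longleftrightarrow> (\<forall>m\<in>M. m \<subseteq> Q \<times> Q) \<and> Id_on Q \<in> M \<and>
     (\<forall>m\<in>M. \<forall>n\<in>M. m O n \<in> M)"

text \<open>Green's relations R and L in the monoid M (M is a monoid, so M^1 = M).\<close>
definition green_R :: "('q \<times> 'q) set set \<Rightarrow> ('q \<times> 'q) set \<Rightarrow> ('q \<times> 'q) set \<Rightarrow> bool" where
  "green_R M m n \<longleftrightarrow> (\<exists>x\<in>M. m = n O x) \<and> (\<exists>y\<in>M. n = m O y)"

definition green_L :: "('q \<times> 'q) set set \<Rightarrow> ('q \<times> 'q) set \<Rightarrow> ('q \<times> 'q) set \<Rightarrow> bool" where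
  "green_L M m n \<longleftrightarrow> (\<exists>x\<in>M. m = x O n) \<and> (\<exists>y\<in>M. n = y O m)"

definition H_class :: "('q \<times> 'q) set set \<Rightarrow> ('q \<times> 'q) set \<Rightarrow> ('q \<times> 'q) set set" where
  "H_class M e = {m \<in> M. green_R M m e \<and> green_L M m e}"

definition H_inv :: "('q \<times> 'q) set set \<Rightarrow> ('q \<times> 'q) set \<Rightarrow> ('q \<times> 'q) set \<Rightarrow> ('q \<times> 'q) set" where
  "H_inv M e m = (THE n. n \<in> H_class M e \<and> m O n = e \<and> n O m = e)"

definition fixed_points :: "('q \<times> 'q) set \<Rightarrow> 'q set" where
  "fixed_points e = {q. (q, q) \<in> e}"

definition fix_restr :: "('q \<times> 'q) set \<Rightarrow> ('q \<times> 'q) set" where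
  "fix_restr e = e \<inter> (fixed_points e \<times> fixed_points e)"

definition SCCs :: "('q \<times> 'q) set \<Rightarrow> 'q set set" where
  "SCCs e = fixed_points e //
     {(p, q). (p, q) \<in> (fix_restr e)\<^sup>* \<and> (q, p) \<in> (fix_restr e)\<^sup>*}"

definition gamma :: "('q \<times> 'q) set set \<Rightarrow> ('q \<times> 'q) set \<Rightarrow> ('q \<times> 'q) set \<Rightarrow> ('q set \<times> 'q set) set" where
  "gamma M e m = {(\<rho>, \<sigma>) \<in> SCCs e \<times> SCCs e.
      \<exists>r\<in>\<rho>. \<exists>s\<in>\<sigma>. (r, s) \<in> m \<and> (s, r) \<in> H_inv M e m}"

definition is_perm_rel :: "'a set \<Rightarrow> ('a \<times> 'a) set \<Rightarrow> bool" where
  "is_perm_rel A r \<longleftrightarrow> (\<exists>f. bij_betw f A A \<and> r = {(x, f x) | x. x \<in> A})"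

end

theory Submission
  imports Defs
begin

lemma comp_mem: "A O B = C \<Longrightarrow> (x,y)\<in>A \<Longrightarrow> (y,z)\<in>B \<Longrightarrow> (x,z)\<in>C" by auto
lemma comp_dec: "(x,z)\<in>C \<Longrightarrow> C = A O B \<Longrightarrow> \<exists>y. (x,y)\<in>A \<and> (y,z)\<in>B" by auto

lemma perm_relI:
  assumes sub: "R \<subseteq> A \<times> A"
    and ex: "\<And>x. x\<in>A \<Longrightarrow> \<exists>y. (x,y)\<in>R"
    and un: "\<And>x y y'. (x,y)\<in>R \<Longrightarrow> (x,y')\<in>R \<Longrightarrow> y = y'"
    and sur: "\<And>y. y\<in>A \<Longrightarrow> \<exists>x. (x,y)\<in>R"
    and inj: "\<And>x x' y. (x,y)\<in>R \<Longrightarrow> (x',y)\<in>R \<Longrightarrow> x = x'"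
  shows "is_perm_rel A R"
proof -
  define f where "f x = (THE y. (x,y)\<in>R)" for x
  have fx: "(x, f x) \<in> R" if "x\<in>A" for x
    unfolding f_def using ex[OF that] un by (metis theI)
  have feq: "f x = y" if "(x,y)\<in>R" for x y
    unfolding f_def using that un by blast
  have "bij_betw f A A"
    unfolding bij_betw_def inj_on_def
  proof (intro conjI ballI impI)
    fix x x' assume "x\<in>A" "x'\<in>A" "f x = f x'"
    then show "x = x'" using fx inj by metis
  next
    show "f ` A = A"
    proof
      show "f ` A \<subseteq> A" using fx sub by blast
      show "A \<subseteq> f ` A"
      proof
        fix y assume "y\<in>A"
        then obtain x where "(x,y)\<in>R" using sur by blast
        then show "y \<in> f ` A" using feq sub by force
      qed
    qed
  qed
  moreover have "R = {(x, f x) | x. x \<in> A}"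
    using fx feq sub by fastforce
  ultimately show ?thesis unfolding is_perm_rel_def by blast
qed

locale ctx =
  fixes Q :: "'q set" and M :: "('q \<times> 'q) set set" and e :: "('q \<times> 'q) set"
  assumes fin: "finite Q" and mon: "rel_monoid Q M" and eM: "e \<in> M" and idem: "e O e = e"
begin

lemma etrans: "(a,b)\<in>e \<Longrightarrow> (b,c)\<in>e \<Longrightarrow> (a,c)\<in>e"
  using idem by (metis comp_mem)

lemma esub: "e \<subseteq> Q \<times> Q" using mon eM unfolding rel_monoid_def by blast

lemma closed: "m\<in>M \<Longrightarrow> n\<in>M \<Longrightarrow> m O n \<in> M" using mon unfolding rel_monoid_def by blast

lemma factor:
  assumes pq: "(p,q)\<in>e"
  shows "\<exists>f. (f,f)\<in>e \<and> (p,f)\<in>e \<and> (f,q)\<in>e"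
proof (rule ccontr)
  assume nf: "\<not> ?thesis"
  define S where "S = {x. (p,x)\<in>e \<and> (x,q)\<in>e}"
  have pred: "\<exists>y\<in>S. (y,x)\<in>e" if "x\<in>S" for x
  proof -
    from that have "(p,x)\<in>e O e" using idem by (simp add: S_def)
    then obtain y where "(p,y)\<in>e" "(y,x)\<in>e" by blast
    moreover have "(y,q)\<in>e" using calculation that etrans S_def by blast
    ultimately show ?thesis unfolding S_def by blast
  qed
  have Sne: "S \<noteq> {}"
  proof -
    from pq have "(p,q)\<in>e O e" using idem by simp
    then show ?thesis unfolding S_def by blast
  qed
  have finS: "finite S"
    by (rule finite_subset[OF _ fin]) (use esub in \<open>auto simp: S_def\<close>)
  define R where "R = e \<inter> (S \<times> S)"
  have trR: "trans R" unfolding R_def trans_def using etrans by blast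
  have "acyclic R" unfolding acyclic_def trancl_id[OF trR]
    using nf unfolding R_def S_def by blast
  moreover have "finite R" unfolding R_def using finS by auto
  ultimately have "wf R" by (metis finite_acyclic_wf)
  moreover obtain x where "x\<in>S" using Sne by blast
  ultimately obtain z where "z\<in>S" "\<And>y. (y,z)\<in>R \<Longrightarrow> y\<notin>S" by (metis wfE_min)
  then show False using pred unfolding R_def by blast
qed

definition cls where "cls x = {y. (y,y)\<in>e \<and> (x,y)\<in>e \<and> (y,x)\<in>e}"

lemma SCCs_eq: "SCCs e = cls ` fixed_points e"
proof -
  let ?E = "{(p, q). (p, q) \<in> (fix_restr e)\<^sup>* \<and> (q, p) \<in> (fix_restr e)\<^sup>*}"
  have rt: "(x,y)\<in>e \<and> (y,y)\<in>e" if "(x,x)\<in>e" "(x,y)\<in>(fix_restr e)\<^sup>*" for x y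
    using that(2,1)
  proof (induction rule: rtrancl_induct)
    case base then show ?case by simp
  next
    case (step y z) then show ?case
      unfolding fix_restr_def fixed_points_def using etrans by blast
  qed
  have "?E``{x} = cls x" if "x \<in> fixed_points e" for x
  proof
    show "?E``{x} \<subseteq> cls x"
    proof
      fix y assume "y \<in> ?E``{x}"
      then have "(x,y)\<in>(fix_restr e)\<^sup>*" "(y,x)\<in>(fix_restr e)\<^sup>*" by auto
      then show "y \<in> cls x" using rt that unfolding cls_def fixed_points_def by blast
    qed
    show "cls x \<subseteq> ?E``{x}"
    proof
      fix y assume "y \<in> cls x"
      then have "(x,y)\<in>fix_restr e" "(y,x)\<in>fix_restr e"
        using that unfolding cls_def fix_restr_def fixed_points_def by auto
      then show "y \<in> ?E``{x}" by auto
    qed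
  qed
  then show ?thesis unfolding SCCs_def quotient_def by auto
qed

lemma cls_self: "x\<in>fixed_points e \<Longrightarrow> x \<in> cls x"
  unfolding cls_def fixed_points_def by auto

lemma cls_eq_iff: "x\<in>fixed_points e \<Longrightarrow> y\<in>fixed_points e \<Longrightarrow>
   cls x = cls y \<longleftrightarrow> (x,y)\<in>e \<and> (y,x)\<in>e"
  unfolding cls_def fixed_points_def using etrans by blast

lemma cls_sub: "cls x \<subseteq> fixed_points e"
  unfolding cls_def fixed_points_def by auto


abbreviation "H \<equiv> H_class M e"

definition inv_pair where
  "inv_pair m a \<longleftrightarrow> m O a = e \<and> a O m = e \<and> e O m = m \<and> m O e = m \<and> e O a = a \<and> a O e = a"

lemma H_unit: assumes "m \<in> H" shows "m \<in> M \<and> e O m = m \<and> m O e = m"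
proof -
  from assms obtain x x' where "m\<in>M" "m = e O x" "m = x' O e"
    unfolding H_class_def green_R_def green_L_def by blast
  moreover have "e O (e O x) = e O x" by (simp add: O_assoc[symmetric] idem)
  moreover have "(x' O e) O e = x' O e" by (simp add: O_assoc idem)
  ultimately show ?thesis by metis
qed

lemma e_H: "e \<in> H"
  unfolding H_class_def green_R_def green_L_def using eM idem by auto

lemma inv_ex: assumes "m \<in> H" shows "\<exists>n\<in>H. m O n = e \<and> n O m = e"
proof -
  from assms obtain y y' where y: "y\<in>M" "e = m O y" and y': "y'\<in>M" "e = y' O m" and mM: "m\<in>M"
    unfolding H_class_def green_R_def green_L_def by blast
  have em: "e O m = m" "m O e = m" using H_unit[OF assms] by auto
  have yy: "e O y = y' O e"
  proof -
    have "y' O e = y' O (m O y)" using y by simp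
    also have "\<dots> = (y' O m) O y" by (simp add: O_assoc)
    also have "\<dots> = e O y" using y' by simp
    finally show ?thesis by simp
  qed
  define n where "n = e O y"
  have nM: "n \<in> M" using closed eM y unfolding n_def by blast
  have mn: "m O n = e"
  proof -
    have "m O n = (m O e) O y" unfolding n_def by (simp add: O_assoc)
    also have "\<dots> = e" using em y by simp
    finally show ?thesis .
  qed
  have nm: "n O m = e"
  proof -
    have "n O m = y' O (e O m)" unfolding n_def yy by (simp add: O_assoc)
    also have "\<dots> = e" using em y' by simp
    finally show ?thesis .
  qed
  have "n \<in> H" unfolding H_class_def green_R_def green_L_def mem_Collect_eq
  proof (intro conjI bexI)
    show "n \<in> M" by (rule nM)
    show "n = e O y" by (rule n_def)
    show "e = n O m" using nm by simp
    show "n = y' O e" using n_def yy by simp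
    show "e = m O n" using mn by simp
  qed (use y y' mM in auto)
  then show ?thesis using mn nm by blast
qed

lemma inv_uniq: assumes "m\<in>H" "n1\<in>H" "n2\<in>H" "m O n1 = e" "n1 O m = e"
   "m O n2 = e" "n2 O m = e" shows "n1 = n2"
proof -
  have "n1 = n1 O e" using H_unit[OF assms(2)] by simp
  also have "\<dots> = (n1 O m) O n2" using assms(6) by (simp add: O_assoc)
  also have "\<dots> = n2" using assms(5) H_unit[OF assms(3)] by simp
  finally show ?thesis .
qed

lemma H_inv_eq: "m\<in>H \<Longrightarrow> n\<in>H \<Longrightarrow> m O n = e \<Longrightarrow> n O m = e \<Longrightarrow> H_inv M e m = n"
  unfolding H_inv_def
proof (rule the_equality)
  assume a: "m\<in>H" "n\<in>H" "m O n = e" "n O m = e"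
  then show "n \<in> H \<and> m O n = e \<and> n O m = e" by simp
  fix x assume "x \<in> H \<and> m O x = e \<and> x O m = e"
  then show "x = n" using inv_uniq[of m x n] a by simp
qed

lemma H_inv_props: assumes "m\<in>H"
  shows "H_inv M e m \<in> H \<and> m O H_inv M e m = e \<and> H_inv M e m O m = e"
proof -
  obtain n where "n\<in>H" "m O n = e" "n O m = e" using inv_ex[OF assms] by blast
  then show ?thesis using H_inv_eq[OF assms] by simp
qed

lemma H_pair: "m\<in>H \<Longrightarrow> inv_pair m (H_inv M e m)"
  unfolding inv_pair_def using H_inv_props H_unit by blast

lemma prod_inv: assumes "m O a = e" "a O m = e" "n O b = e" "b O n = e"
  "e O m = m" "m O e = m" "e O n = n" "n O e = n"
  shows "(m O n) O (b O a) = e" "(b O a) O (m O n) = e"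
proof -
  have "(m O n) O (b O a) = m O ((n O b) O a)" by (simp add: O_assoc)
  also have "\<dots> = e" using assms by (simp add: O_assoc[symmetric])
  finally show "(m O n) O (b O a) = e" .
  have "(b O a) O (m O n) = b O ((a O m) O n)" by (simp add: O_assoc)
  also have "\<dots> = e" using assms by (simp add: O_assoc[symmetric])
  finally show "(b O a) O (m O n) = e" .
qed

lemma H_mult: assumes "m\<in>H" "n\<in>H" shows "m O n \<in> H"
proof -
  let ?a = "H_inv M e m" and ?b = "H_inv M e n"
  have a: "?a \<in> H" "m O ?a = e" "?a O m = e" using H_inv_props[OF assms(1)] by auto
  have b: "?b \<in> H" "n O ?b = e" "?b O n = e" using H_inv_props[OF assms(2)] by auto
  have um: "m\<in>M" "e O m = m" "m O e = m" using H_unit[OF assms(1)] by auto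
  have un: "n\<in>M" "e O n = n" "n O e = n" using H_unit[OF assms(2)] by auto
  have aM: "?a \<in> M" "?b \<in> M" using a(1) b(1) H_unit by auto
  have mnM: "m O n \<in> M" "?b O ?a \<in> M" using closed um un aM by auto
  have 1: "m O n = e O (m O n)" using um by (simp add: O_assoc[symmetric])
  have 3: "m O n = (m O n) O e" using un by (simp add: O_assoc)
  have 24: "(m O n) O (?b O ?a) = e" "(?b O ?a) O (m O n) = e"
    using prod_inv[OF a(2,3) b(2,3) um(2,3) un(2,3)] by auto
  show ?thesis unfolding H_class_def green_R_def green_L_def
    using mnM eM 1 3 24 by blast
qed

lemma H_inv_mult: assumes "m\<in>H" "n\<in>H"
  shows "H_inv M e (m O n) = H_inv M e n O H_inv M e m"
proof -
  let ?a = "H_inv M e m" and ?b = "H_inv M e n"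
  have a: "?a \<in> H" "m O ?a = e" "?a O m = e" using H_inv_props[OF assms(1)] by auto
  have b: "?b \<in> H" "n O ?b = e" "?b O n = e" using H_inv_props[OF assms(2)] by auto
  have um: "e O m = m" "m O e = m" using H_unit[OF assms(1)] by auto
  have un: "e O n = n" "n O e = n" using H_unit[OF assms(2)] by auto
  have 24: "(m O n) O (?b O ?a) = e" "(?b O ?a) O (m O n) = e"
    using prod_inv[OF a(2,3) b(2,3) um un] by auto
  show ?thesis by (rule H_inv_eq) (use H_mult assms a b 24 in auto)
qed

definition G where
  "G m a = {(\<rho>, \<sigma>) \<in> SCCs e \<times> SCCs e. \<exists>r\<in>\<rho>. \<exists>s\<in>\<sigma>. (r, s) \<in> m \<and> (s, r) \<in> a}"

lemma gamma_G: "gamma M e m = G m (H_inv M e m)"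
  unfolding gamma_def G_def by simp

lemma G_char: assumes ip: "inv_pair m a" and x: "x\<in>fixed_points e" and y: "y\<in>fixed_points e"
  shows "(cls x, cls y) \<in> G m a \<longleftrightarrow> (x,y)\<in>m \<and> (y,x)\<in>a"
proof
  assume "(cls x, cls y) \<in> G m a"
  then obtain r s where r: "r\<in>cls x" and s: "s\<in>cls y" and rs: "(r,s)\<in>m" "(s,r)\<in>a"
    unfolding G_def by blast
  have "(x,r)\<in>e" "(r,x)\<in>e" "(y,s)\<in>e" "(s,y)\<in>e" using r s unfolding cls_def by auto
  moreover have "e O m O e = m" "e O a O e = a" using ip unfolding inv_pair_def by (simp_all add: O_assoc[symmetric])
  ultimately have "(x,y)\<in>e O m O e" "(y,x)\<in>e O a O e" using rs by blast+
  then show "(x,y)\<in>m \<and> (y,x)\<in>a" using \<open>e O m O e = m\<close> \<open>e O a O e = a\<close> by simp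
next
  assume "(x,y)\<in>m \<and> (y,x)\<in>a"
  then show "(cls x, cls y) \<in> G m a" unfolding G_def SCCs_eq
    using x y cls_self by blast
qed

lemma G_sub: "G m a \<subseteq> SCCs e \<times> SCCs e" unfolding G_def by auto

lemma G_cases: assumes "(\<rho>,\<sigma>) \<in> G m a"
  obtains x y where "x\<in>fixed_points e" "y\<in>fixed_points e" "\<rho> = cls x" "\<sigma> = cls y"
proof -
  have "\<rho> \<in> cls ` fixed_points e" "\<sigma> \<in> cls ` fixed_points e"
    using assms G_sub SCCs_eq by auto
  then show ?thesis using that by blast
qed


lemma fixI: "(x,x)\<in>e \<Longrightarrow> x \<in> fixed_points e" unfolding fixed_points_def by simp
lemma fixD: "x \<in> fixed_points e \<Longrightarrow> (x,x)\<in>e" unfolding fixed_points_def by simp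

lemma G_perm: assumes ip: "inv_pair m a" shows "is_perm_rel (SCCs e) (G m a)"
proof -
  have ma: "m O a = e" "a O m = e" using ip unfolding inv_pair_def by auto
  show ?thesis
  proof (rule perm_relI[OF G_sub])
    fix \<rho> assume "\<rho> \<in> SCCs e"
    then obtain x where x: "x\<in>fixed_points e" "\<rho> = cls x" using SCCs_eq by blast
    from fixD[OF x(1)] obtain y where "(x,y)\<in>m" "(y,x)\<in>a" using ma by blast
    moreover have "y\<in>fixed_points e" using calculation comp_mem[OF ma(2)] by (blast intro: fixI)
    ultimately show "\<exists>\<sigma>. (\<rho>,\<sigma>)\<in>G m a" using G_char[OF ip x(1)] x by blast
  next
    fix \<sigma> assume "\<sigma> \<in> SCCs e"
    then obtain y where y: "y\<in>fixed_points e" "\<sigma> = cls y" using SCCs_eq by blast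
    from fixD[OF y(1)] obtain x where "(y,x)\<in>a" "(x,y)\<in>m" using ma by blast
    moreover have "x\<in>fixed_points e" using calculation comp_mem[OF ma(1)] by (blast intro: fixI)
    ultimately show "\<exists>\<rho>. (\<rho>,\<sigma>)\<in>G m a" using G_char[OF ip _ y(1)] y by blast
  next
    fix \<rho> \<sigma> \<sigma>' assume 1: "(\<rho>,\<sigma>)\<in>G m a" and 2: "(\<rho>,\<sigma>')\<in>G m a"
    from 1 obtain x y where xy: "x\<in>fixed_points e" "y\<in>fixed_points e" "\<rho> = cls x" "\<sigma> = cls y"
      by (rule G_cases)
    from 2 obtain x' y' where xy': "x'\<in>fixed_points e" "y'\<in>fixed_points e" "\<rho> = cls x'" "\<sigma>' = cls y'"
      by (rule G_cases)
    have "(x,y)\<in>m" "(y,x)\<in>a" using 1 xy G_char[OF ip] by auto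
    moreover have "(x,y')\<in>m" "(y',x)\<in>a" using 2 xy xy' G_char[OF ip] by auto
    ultimately have "(y,y')\<in>e" "(y',y)\<in>e" using ma by blast+
    then show "\<sigma> = \<sigma>'" using xy xy' cls_eq_iff by auto
  next
    fix \<rho> \<rho>' \<sigma> assume 1: "(\<rho>,\<sigma>)\<in>G m a" and 2: "(\<rho>',\<sigma>)\<in>G m a"
    from 1 obtain x y where xy: "x\<in>fixed_points e" "y\<in>fixed_points e" "\<rho> = cls x" "\<sigma> = cls y"
      by (rule G_cases)
    from 2 obtain x' y' where xy': "x'\<in>fixed_points e" "y'\<in>fixed_points e" "\<rho>' = cls x'" "\<sigma> = cls y'"
      by (rule G_cases)
    have "(x,y)\<in>m" "(y,x)\<in>a" using 1 xy G_char[OF ip] by auto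
    moreover have "(x',y)\<in>m" "(y,x')\<in>a" using 2 xy xy' G_char[OF ip] by auto
    ultimately have "(x,x')\<in>e" "(x',x)\<in>e" using ma by blast+
    then show "\<rho> = \<rho>'" using xy xy' cls_eq_iff by auto
  qed
qed

lemma G_hom: assumes ip: "inv_pair m a" and iq: "inv_pair n b"
  and ip2: "inv_pair (m O n) (b O a)"
  shows "G (m O n) (b O a) = G m a O G n b"
proof (intro equalityI subrelI)
  have ma: "m O a = e" "a O m = e" using ip unfolding inv_pair_def by auto
  have nb: "n O b = e" "b O n = e" "b O e = b" using iq unfolding inv_pair_def by auto
  fix \<rho> \<tau> assume 1: "(\<rho>,\<tau>) \<in> G (m O n) (b O a)"
  then obtain x z where xz: "x\<in>fixed_points e" "z\<in>fixed_points e" "\<rho> = cls x" "\<tau> = cls z"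
    by (rule G_cases)
  have "(x,z)\<in>m O n" "(z,x)\<in>b O a" using 1 xz G_char[OF ip2] by auto
  then obtain u v where u: "(x,u)\<in>m" "(u,z)\<in>n" and v: "(z,v)\<in>b" "(v,x)\<in>a" by blast
  have "(v,u)\<in>e" using v(2) u(1) ma by blast
  then have "(u,u)\<in>e" using u(2) v(1) nb etrans by blast
  have "(z,u)\<in>b" using v(1) \<open>(v,u)\<in>e\<close> comp_mem[OF nb(3)] by blast
  have "(z,x)\<in>b O a" using v by blast
  have "(u,x)\<in>a"
  proof -
    have "(u,x)\<in>n O (b O a)" using u(2) v by blast
    moreover have "n O (b O a) = a" using nb ip unfolding inv_pair_def by (simp add: O_assoc[symmetric])
    ultimately show ?thesis by simp
  qed
  have uF: "u\<in>fixed_points e" by (rule fixI) fact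
  have "(cls x, cls u)\<in>G m a" using G_char[OF ip xz(1) uF] u \<open>(u,x)\<in>a\<close> by simp
  moreover have "(cls u, cls z)\<in>G n b" using G_char[OF iq uF xz(2)] u \<open>(z,u)\<in>b\<close> by simp
  ultimately show "(\<rho>,\<tau>) \<in> G m a O G n b" using xz by blast
next
  fix \<rho> \<tau> assume "(\<rho>,\<tau>) \<in> G m a O G n b"
  then obtain \<sigma> where 1: "(\<rho>,\<sigma>)\<in>G m a" and 2: "(\<sigma>,\<tau>)\<in>G n b" by blast
  from 1 obtain x y where xy: "x\<in>fixed_points e" "y\<in>fixed_points e" "\<rho> = cls x" "\<sigma> = cls y"
    by (rule G_cases)
  from 2 obtain y' z where yz: "y'\<in>fixed_points e" "z\<in>fixed_points e" "\<sigma> = cls y'" "\<tau> = cls z"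
    by (rule G_cases)
  have "(x,y)\<in>m" "(y,x)\<in>a" using 1 xy G_char[OF ip] by auto
  moreover have "(y,z)\<in>n" "(z,y)\<in>b" using 2 xy yz G_char[OF iq] by auto
  ultimately have "(x,z)\<in>m O n" "(z,x)\<in>b O a" by blast+
  then show "(\<rho>,\<tau>) \<in> G (m O n) (b O a)" using G_char[OF ip2 xy(1) yz(2)] xy yz by simp
qed

lemma e_pair: "inv_pair e e" unfolding inv_pair_def using idem by simp

lemma G_id: "G e e = Id_on (SCCs e)"
proof (intro equalityI subrelI)
  fix \<rho> \<sigma> assume 1: "(\<rho>,\<sigma>)\<in>G e e"
  then obtain x y where xy: "x\<in>fixed_points e" "y\<in>fixed_points e" "\<rho> = cls x" "\<sigma> = cls y"
    by (rule G_cases)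
  have "(x,y)\<in>e" "(y,x)\<in>e" using 1 xy G_char[OF e_pair] by auto
  then have "cls x = cls y" using xy cls_eq_iff by auto
  then show "(\<rho>,\<sigma>)\<in>Id_on (SCCs e)" using xy SCCs_eq by auto
next
  fix \<rho> \<sigma> assume "(\<rho>,\<sigma>)\<in>Id_on (SCCs e)"
  then obtain x where "x\<in>fixed_points e" "\<rho> = cls x" "\<sigma> = \<rho>" using SCCs_eq by auto
  then show "(\<rho>,\<sigma>)\<in>G e e" using G_char[OF e_pair] fixD by auto
qed

lemma G_kernel: assumes ip: "inv_pair g h" and k: "G g h = Id_on (SCCs e)" shows "g = e"
proof -
  have gh: "g O h = e" "h O g = e" "e O g = g" "g O e = g" using ip unfolding inv_pair_def by auto
  have ker: "(x,y)\<in>e" if "x\<in>fixed_points e" "y\<in>fixed_points e" "(x,y)\<in>g" "(y,x)\<in>h" for x y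
  proof -
    have "(cls x, cls y) \<in> G g h" using G_char[OF ip that(1,2)] that(3,4) by simp
    then have "cls x = cls y" using k by auto
    then show ?thesis using cls_eq_iff[OF that(1,2)] by simp
  qed
  have fix_g: "(f,f')\<in>e" if f: "(f,f)\<in>e" and f': "(f',f')\<in>e" and ff: "(f,f')\<in>g" for f f'
  proof -
    from comp_dec[OF f' gh(2)[symmetric]] obtain t where t: "(f',t)\<in>h" "(t,f')\<in>g" by blast
    have "(t,t)\<in>e" by (rule comp_mem[OF gh(1) t(2) t(1)])
    then have "(t,f')\<in>e" using ker[OF fixI fixI, OF \<open>(t,t)\<in>e\<close> f' t(2) t(1)] by simp
    moreover have "(f,t)\<in>e" by (rule comp_mem[OF gh(1) ff t(1)])
    ultimately show ?thesis using etrans by blast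
  qed
  have e3: "e O (g O e) = g" using gh by (simp add: O_assoc[symmetric])
  show ?thesis
  proof (intro equalityI subrelI)
    fix p q assume "(p,q)\<in>g"
    then have "(p,q)\<in>e O (g O e)" using e3 by simp
    then obtain p1 where p1: "(p,p1)\<in>e" "(p1,q)\<in>g O e" by blast
    from factor[OF p1(1)] obtain f where f: "(f,f)\<in>e" "(p,f)\<in>e" "(f,p1)\<in>e" by blast
    have "(f,q)\<in>e O (g O e)" using f(3) p1(2) by (rule relcompI)
    then have "(f,q)\<in>g O e" using gh(3) by (simp add: O_assoc[symmetric])
    then obtain q1 where q1: "(f,q1)\<in>g" "(q1,q)\<in>e" by blast
    from factor[OF q1(2)] obtain f' where f': "(f',f')\<in>e" "(q1,f')\<in>e" "(f',q)\<in>e" by blast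
    have "(f,f')\<in>g" by (rule comp_mem[OF gh(4) q1(1) f'(2)])
    then have "(f,f')\<in>e" using fix_g f(1) f'(1) by blast
    then show "(p,q)\<in>e" using f(2) f'(3) etrans by blast
  next
    fix p q assume "(p,q)\<in>e"
    from factor[OF this] obtain f where f: "(f,f)\<in>e" "(p,f)\<in>e" "(f,q)\<in>e" by blast
    from comp_dec[OF f(1) gh(1)[symmetric]] obtain s where s: "(f,s)\<in>g" "(s,f)\<in>h" by blast
    have "(s,s)\<in>e" by (rule comp_mem[OF gh(2) s(2) s(1)])
    have "(f,s)\<in>e" using ker[OF fixI fixI, OF f(1) \<open>(s,s)\<in>e\<close> s] .
    have "(f,f)\<in>e" by (rule f(1))
    have "(s,f)\<in>e"
    proof -
      have "cls f = cls s"
        using G_char[OF ip fixI[OF f(1)] fixI[OF \<open>(s,s)\<in>e\<close>]] s k by auto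
      then show ?thesis using cls_eq_iff[OF fixI[OF f(1)] fixI[OF \<open>(s,s)\<in>e\<close>]] by simp
    qed
    have "(s,q)\<in>e" using \<open>(s,f)\<in>e\<close> f(3) etrans by blast
    then have "(p,q)\<in>e O (g O e)" using f(2) s(1) by blast
    then show "(p,q)\<in>g" using e3 by simp
  qed
qed
end

theorem mainTheorem7:
  fixes Q :: "'q set" and M :: "('q \<times> 'q) set set" and e :: "('q \<times> 'q) set"
  assumes "finite Q" and "rel_monoid Q M" and "e \<in> M" and "e O e = e"
  shows "(\<forall>m\<in>H_class M e. is_perm_rel (SCCs e) (gamma M e m))
    \<and> (\<forall>m\<in>H_class M e. \<forall>n\<in>H_class M e. gamma M e (m O n) = gamma M e m O gamma M e n)
    \<and> gamma M e e = Id_on (SCCs e)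
    \<and> inj_on (gamma M e) (H_class M e)"
proof -
  interpret ctx Q M e using assms by unfold_locales
  have P1: "\<forall>m\<in>H. is_perm_rel (SCCs e) (gamma M e m)"
  proof
    fix m assume "m\<in>H"
    then have "is_perm_rel (SCCs e) (G m (H_inv M e m))" by (intro G_perm H_pair)
    then show "is_perm_rel (SCCs e) (gamma M e m)" by (simp only: gamma_G)
  qed
  have P2: "gamma M e (m O n) = gamma M e m O gamma M e n" if "m\<in>H" "n\<in>H" for m n
  proof -
    have "gamma M e (m O n) = G (m O n) (H_inv M e n O H_inv M e m)"
      using H_inv_mult[OF that] by (simp only: gamma_G)
    also have "\<dots> = G m (H_inv M e m) O G n (H_inv M e n)"
    proof (rule G_hom)
      show "inv_pair m (H_inv M e m)" "inv_pair n (H_inv M e n)" using H_pair that by auto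
      show "inv_pair (m O n) (H_inv M e n O H_inv M e m)"
        using H_pair[OF H_mult[OF that]] H_inv_mult[OF that] by simp
    qed
    finally show ?thesis by (simp only: gamma_G)
  qed
  have P3: "gamma M e e = Id_on (SCCs e)"
  proof -
    have "H_inv M e e = e" using H_inv_eq e_H idem by simp
    then show ?thesis using G_id by (simp only: gamma_G)
  qed
  have P4: "inj_on (gamma M e) H"
  proof (rule inj_onI)
    fix m m' assume m: "m\<in>H" and m': "m'\<in>H" and eq: "gamma M e m = gamma M e m'"
    let ?a = "H_inv M e m'"
    have a: "?a\<in>H" "m' O ?a = e" "?a O m' = e" using H_inv_props[OF m'] by auto
    have "gamma M e (m O ?a) = gamma M e m O gamma M e ?a" using P2[OF m a(1)] .
    also have "\<dots> = gamma M e m' O gamma M e ?a" using eq by simp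
    also have "\<dots> = gamma M e (m' O ?a)" using P2[OF m' a(1)] by simp
    also have "\<dots> = Id_on (SCCs e)" using a P3 by simp
    finally have "G (m O ?a) (H_inv M e (m O ?a)) = Id_on (SCCs e)" by (simp only: gamma_G)
    then have ma: "m O ?a = e" using G_kernel[OF H_pair[OF H_mult[OF m a(1)]]] by simp
    have "m = m O e" using H_unit[OF m] by simp
    also have "\<dots> = (m O ?a) O m'" using a by (simp add: O_assoc)
    also have "\<dots> = m'" using ma H_unit[OF m'] by simp
    finally show "m = m'" .
  qed
  show ?thesis using P1 P2 P3 P4 by (intro conjI ballI) auto
qed

end
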